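(* For a prime $p$ let $\mathrm{Aff}_1(p) = \{x \mapsto ax + b : a \in \mathbb{F}_p^\times, b \in \mathbb{F}_p\} \cong C_p \rtimes C_{p-1}$ act naturally on $\mathbb{F}_p$. Then the sequence of actions $(\mathrm{Aff}_1(p) \circlearrowright \mathbb{F}_p)_{p \geq 3}$ ($p$ ranging over odd primes) is not expanding.
   Context: For a group $G$ acting on a finite set $\Omega$ and a symmetric subset $S \subseteq G$, the Schreier graph $\mathrm{Sch}(G \circlearrowright \Omega, S)$ has vertex set $\Omega$ and an edge $(\omega, \omega^s)$ for each $\omega \in \Omega$, $s \in S$. For a finite graph $\Gamma$, $h_{ver}(\Gamma) = \min_{X \neq \emptyset, |X| \leq |V(\Gamma)|/2} |\partial_{ver}X|/|X|$, where $\partial_{ver}X$ is the set of vertices at distance exactly $1$ from $X$. A sequence of regular bounded-degree graphs with vertex counts tending to infinity is expander if $h_{ver} \geq \varepsilon$ for a fixed $\varepsilon > 0$. A sequence of transitive actions $(G_n \circlearrowright \Omega_n)$ is expanding if there are symmetric subsets $S_n \subseteq G_n$ of bounded cardinality with $(\mathrm{Sch}(G_n \circlearrowright \Omega_n, S_n))$ expander graphs. *)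

theory Defs
  imports Complex_Main "HOL-Computational_Algebra.Primes"
begin

definition vertex_boundary :: "'v set \<Rightarrow> ('v \<Rightarrow> 'v \<Rightarrow> bool) \<Rightarrow> 'v set \<Rightarrow> 'v set" where
  "vertex_boundary V adj X = {v \<in> V - X. \<exists>x\<in>X. adj x v}"

definition h_ver :: "'v set \<Rightarrow> ('v \<Rightarrow> 'v \<Rightarrow> bool) \<Rightarrow> real" where
  "h_ver V adj = Min {real (card (vertex_boundary V adj X)) / real (card X) | X.
       X \<subseteq> V \<and> X \<noteq> {} \<and> 2 * card X \<le> card V}"

definition schreier_adj :: "('g \<Rightarrow> 'w \<Rightarrow> 'w) \<Rightarrow> 'g set \<Rightarrow> 'w \<Rightarrow> 'w \<Rightarrow> bool" where
  "schreier_adj act S w w' \<longleftrightarrow> (\<exists>s\<in>S. w' = act s w)"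

definition aff_grp :: "nat \<Rightarrow> (nat \<times> nat) set" where
  "aff_grp p = {(a, b). 1 \<le> a \<and> a < p \<and> b < p}"

definition aff_act :: "nat \<Rightarrow> nat \<times> nat \<Rightarrow> nat \<Rightarrow> nat" where
  "aff_act p g x = (fst g * x + snd g) mod p"

definition aff_comp :: "nat \<Rightarrow> nat \<times> nat \<Rightarrow> nat \<times> nat \<Rightarrow> nat \<times> nat" where
  "aff_comp p g h = ((fst g * fst h) mod p, (fst g * snd h + snd g) mod p)"

definition aff_symmetric :: "nat \<Rightarrow> (nat \<times> nat) set \<Rightarrow> bool" where
  "aff_symmetric p S \<longleftrightarrow> (\<forall>s\<in>S. \<exists>t\<in>S. aff_comp p t s = (1, 0))"

definition aff_expanding :: bool where
  "aff_expanding \<longleftrightarrow>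
     (\<exists>k::nat. \<exists>\<epsilon>::real. \<epsilon> > 0 \<and>
        (\<exists>S :: nat \<Rightarrow> (nat \<times> nat) set. \<forall>p. prime p \<and> odd p \<longrightarrow>
            S p \<subseteq> aff_grp p \<and> aff_symmetric p (S p) \<and> card (S p) \<le> k \<and>
            h_ver {..<p} (schreier_adj (aff_act p) (S p)) \<ge> \<epsilon>))"

end

theory Submission
  imports Defs "HOL-Library.FuncSet"
begin

definition Exps :: "(nat\<times>nat) set \<Rightarrow> nat \<Rightarrow> ((nat\<times>nat) \<Rightarrow> nat) set" where
  "Exps S N = PiE S (\<lambda>_. {..<N})"

definition Idx :: "(nat\<times>nat) set \<Rightarrow> nat \<Rightarrow> ((nat\<times>nat) \<times> ((nat\<times>nat) \<Rightarrow> nat)) set" where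
  "Idx S N = S \<times> Exps S N"

definition Coef :: "(nat\<times>nat) set \<Rightarrow> nat \<Rightarrow> (((nat\<times>nat) \<times> ((nat\<times>nat) \<Rightarrow> nat)) \<Rightarrow> nat) set" where
  "Coef S N = PiE (Idx S N) (\<lambda>_. {..<N})"

definition Ebox where "Ebox S N = Exps S N \<times> Coef S N"

definition Aexp :: "(nat\<times>nat) set \<Rightarrow> ((nat\<times>nat) \<Rightarrow> nat) \<Rightarrow> nat" where
  "Aexp S e = (\<Prod>t\<in>S. fst t ^ e t)"

definition Bco :: "(nat\<times>nat) set \<Rightarrow> nat \<Rightarrow> (((nat\<times>nat) \<times> ((nat\<times>nat) \<Rightarrow> nat)) \<Rightarrow> nat) \<Rightarrow> nat" where
  "Bco S N c = (\<Sum>i\<in>Idx S N. c i * Aexp S (snd i) * snd (fst i))"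

definition fmap where
  "fmap p S N u x = (Aexp S (fst u) * x + Bco S N (snd u)) mod p"

definition Tm :: "nat\<times>nat \<Rightarrow> ((nat\<times>nat) \<Rightarrow> nat) \<times> (((nat\<times>nat) \<times> ((nat\<times>nat) \<Rightarrow> nat)) \<Rightarrow> nat)
   \<Rightarrow> ((nat\<times>nat) \<Rightarrow> nat) \<times> (((nat\<times>nat) \<times> ((nat\<times>nat) \<Rightarrow> nat)) \<Rightarrow> nat)" where
  "Tm s u = ((fst u)(s := Suc (fst u s)), (snd u)((s, fst u) := Suc (snd u (s, fst u))))"

lemma finite_Exps: "finite S \<Longrightarrow> finite (Exps S N)"
  unfolding Exps_def by (simp add: finite_PiE)

lemma finite_Idx: "finite S \<Longrightarrow> finite (Idx S N)"
  unfolding Idx_def by (simp add: finite_Exps)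

lemma finite_Coef: "finite S \<Longrightarrow> finite (Coef S N)"
  unfolding Coef_def by (simp add: finite_PiE finite_Idx)

lemma finite_Ebox: "finite S \<Longrightarrow> finite (Ebox S N)"
  unfolding Ebox_def by (simp add: finite_Exps finite_Coef)

lemma Aexp_upd:
  assumes "finite S" "s \<in> S"
  shows "Aexp S (e(s := Suc (e s))) = Aexp S e * fst s"
proof -
  have "Aexp S (e(s := Suc (e s))) = fst s ^ Suc (e s) * (\<Prod>t\<in>S-{s}. fst t ^ (e(s := Suc (e s))) t)"
    unfolding Aexp_def by (simp add: prod.remove[OF assms])
  also have "(\<Prod>t\<in>S-{s}. fst t ^ (e(s := Suc (e s))) t) = (\<Prod>t\<in>S-{s}. fst t ^ e t)"
    by (rule prod.cong) auto
  also have "Aexp S e = fst s ^ e s * (\<Prod>t\<in>S-{s}. fst t ^ e t)"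
    unfolding Aexp_def by (simp add: prod.remove[OF assms])
  ultimately show ?thesis by (simp add: fun_upd_def algebra_simps)
qed

lemma Bco_upd:
  assumes "finite S" "s \<in> S" "e \<in> Exps S N"
  shows "Bco S N (c((s,e) := Suc (c (s,e)))) = Bco S N c + Aexp S e * snd s"
proof -
  have m: "(s,e) \<in> Idx S N" using assms by (simp add: Idx_def)
  have f: "finite (Idx S N)" using assms by (simp add: finite_Idx)
  let ?c = "c((s,e) := Suc (c (s,e)))"
  have "Bco S N ?c = ?c (s,e) * Aexp S e * snd s + (\<Sum>i\<in>Idx S N - {(s,e)}. ?c i * Aexp S (snd i) * snd (fst i))"
    unfolding Bco_def by (simp add: sum.remove[OF f m])
  also have "(\<Sum>i\<in>Idx S N - {(s,e)}. ?c i * Aexp S (snd i) * snd (fst i)) = (\<Sum>i\<in>Idx S N - {(s,e)}. c i * Aexp S (snd i) * snd (fst i))"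
    by (rule sum.cong) auto
  also have "Bco S N c = c (s,e) * Aexp S e * snd s + (\<Sum>i\<in>Idx S N - {(s,e)}. c i * Aexp S (snd i) * snd (fst i))"
    unfolding Bco_def by (simp add: sum.remove[OF f m])
  ultimately show ?thesis by (simp add: fun_upd_def algebra_simps)
qed

lemma shift:
  assumes "finite S" "s \<in> S" "e \<in> Exps S N"
  shows "fmap p S N (Tm s (e,c)) x = fmap p S N (e,c) (aff_act p s x)"
proof -
  have "fmap p S N (Tm s (e,c)) x = (Aexp S e * fst s * x + (Bco S N c + Aexp S e * snd s)) mod p"
    unfolding fmap_def Tm_def using Aexp_upd[OF assms(1,2)] Bco_upd[OF assms] by simp
  also have "\<dots> = (Aexp S e * (fst s * x + snd s) + Bco S N c) mod p"
    by (simp add: algebra_simps)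
  also have "\<dots> = (Aexp S e * ((fst s * x + snd s) mod p) + Bco S N c) mod p"
    by (metis mod_add_left_eq mod_mult_right_eq)
  finally show ?thesis unfolding fmap_def aff_act_def by simp
qed

lemma finite_aff: "finite (aff_grp p)"
proof -
  have "aff_grp p \<subseteq> {..<p} \<times> {..<p}" unfolding aff_grp_def by auto
  thus ?thesis by (rule finite_subset) auto
qed

lemma notdvd:
  assumes "prime p" "S \<subseteq> aff_grp p"
  shows "\<not> p dvd Aexp S e"
proof
  assume "p dvd Aexp S e"
  have fS: "finite S" using assms(2) finite_aff finite_subset by blast
  have "\<exists>t\<in>S. p dvd fst t ^ e t"
    using \<open>p dvd Aexp S e\<close> prime_dvd_prod_iff[OF fS assms(1)] unfolding Aexp_def by simp
  then obtain t where t: "t \<in> S" "p dvd fst t ^ e t" by blast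
  have "p dvd fst t" using prime_dvd_power[OF assms(1) t(2)] .
  moreover have "1 \<le> fst t" "fst t < p" using t(1) assms(2) unfolding aff_grp_def by auto
  ultimately show False using nat_dvd_not_less[of "fst t" p] by simp
qed

lemma fmap_inj:
  assumes "prime p" "S \<subseteq> aff_grp p"
  shows "inj_on (fmap p S N u) {..<p}"
proof (rule inj_onI)
  fix x y assume x: "x \<in> {..<p}" and y: "y \<in> {..<p}" and eq: "fmap p S N u x = fmap p S N u y"
  let ?A = "Aexp S (fst u)" and ?B = "Bco S N (snd u)"
  have nd: "\<not> p dvd ?A" using notdvd[OF assms] .
  have gen: "a = b" if "a < p" "b < p" "a \<le> b" "(?A * a + ?B) mod p = (?A * b + ?B) mod p" for a b
  proof -
    have "?A * a + ?B \<le> ?A * b + ?B" using that(3) by simp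
    hence "p dvd (?A * b + ?B) - (?A * a + ?B)" using that(4) mod_eq_dvd_iff_nat by metis
    also have "(?A * b + ?B) - (?A * a + ?B) = ?A * (b - a)" by (simp add: diff_mult_distrib2)
    finally have "p dvd (b - a)" using nd assms(1) prime_dvd_mult_iff by blast
    moreover have "b - a < p" using that by simp
    ultimately have "b - a = 0" using nat_dvd_not_less by (metis gr0I)
    thus ?thesis using that(3) by simp
  qed
  show "x = y"
  proof (cases "x \<le> y")
    case True thus ?thesis using gen x y eq unfolding fmap_def by auto
  next
    case False thus ?thesis using gen[of y x] x y eq unfolding fmap_def by auto
  qed
qed

lemma fmap_one:
  assumes "prime p" "S \<subseteq> aff_grp p" "x0 < p"
  shows "card {x \<in> {..<p}. fmap p S N u x = x0} = 1"
proof -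
  have p0: "p > 0" using assms(1) prime_gt_0_nat by blast
  have "fmap p S N u ` {..<p} \<subseteq> {..<p}" unfolding fmap_def using p0 by auto
  hence "fmap p S N u ` {..<p} = {..<p}" using endo_inj_surj fmap_inj[OF assms(1,2)] by blast
  then obtain x where x: "x < p" "fmap p S N u x = x0" using assms(3) by (metis imageE lessThan_iff)
  have "{x \<in> {..<p}. fmap p S N u x = x0} = {x}"
    using x fmap_inj[OF assms(1,2), of N u] unfolding inj_on_def by auto
  thus ?thesis by simp
qed

lemma card_swap:
  assumes "finite A" "finite B"
  shows "(\<Sum>a\<in>A. card {b\<in>B. P a b}) = (\<Sum>b\<in>B. card {a\<in>A. P a b})"
proof -
  have c: "card {y\<in>Y. Q y} = (\<Sum>y\<in>Y. if Q y then 1 else 0)" if "finite Y" for Y :: "'z set" and Q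
    using sum.inter_filter[OF that, of "\<lambda>_. 1::nat" Q] by simp
  show ?thesis using assms by (simp add: c sum.swap[of _ A B])
qed

definition phi where "phi p S N x0 x = card {u \<in> Ebox S N. fmap p S N u x = x0}"

lemma sum_fiber:
  assumes "prime p" "S \<subseteq> aff_grp p" "x0 < p" "D \<subseteq> Ebox S N"
  shows "(\<Sum>x\<in>{..<p}. card {u \<in> D. fmap p S N u x = x0}) = card D"
proof -
  have fS: "finite S" using assms(2) finite_aff finite_subset by blast
  have fD: "finite D" using assms(4) finite_Ebox[OF fS] finite_subset by blast
  have "(\<Sum>x\<in>{..<p}. card {u \<in> D. fmap p S N u x = x0}) = (\<Sum>u\<in>D. card {x \<in> {..<p}. fmap p S N u x = x0})"
    by (rule card_swap) (auto simp: fD)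
  also have "\<dots> = (\<Sum>u\<in>D. 1)" using fmap_one[OF assms(1-3)] by simp
  finally show ?thesis by simp
qed

lemma Tm_inj: "inj (Tm s)"
proof (rule injI)
  fix u v assume eq: "Tm s u = Tm s v"
  obtain e c where u: "u = (e,c)" by (cases u)
  obtain e' c' where v: "v = (e',c')" by (cases v)
  have e1: "e(s := Suc (e s)) = e'(s := Suc (e' s))" and
       c1: "c((s,e) := Suc (c (s,e))) = c'((s,e') := Suc (c' (s,e')))"
    using eq unfolding u v Tm_def by auto
  have "e t = e' t" for t
    using fun_cong[OF e1, of t] by (cases "t = s") auto
  hence ee: "e = e'" by auto
  have "c t = c' t" for t
    using fun_cong[OF c1, of t] ee by (cases "t = (s,e)") auto
  hence "c = c'" by auto
  thus "u = v" using u v ee by simp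
qed

lemma phi_le:
  assumes "S \<subseteq> aff_grp p" "s \<in> S"
  shows "phi p S N x0 x \<le> card {u \<in> Ebox S N - Tm s ` Ebox S N. fmap p S N u x = x0} + phi p S N x0 (aff_act p s x)"
proof -
  have fS: "finite S" using assms(1) finite_aff finite_subset by blast
  let ?E = "Ebox S N"
  have sub: "{u \<in> ?E. fmap p S N u x = x0} \<subseteq> {u \<in> ?E - Tm s ` ?E. fmap p S N u x = x0} \<union> Tm s ` {w \<in> ?E. fmap p S N w (aff_act p s x) = x0}"
  proof
    fix u assume u: "u \<in> {u \<in> ?E. fmap p S N u x = x0}"
    show "u \<in> {u \<in> ?E - Tm s ` ?E. fmap p S N u x = x0} \<union> Tm s ` {w \<in> ?E. fmap p S N w (aff_act p s x) = x0}"
    proof (cases "u \<in> Tm s ` ?E")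
      case True
      then obtain w where w: "w \<in> ?E" "u = Tm s w" by blast
      obtain e c where wc: "w = (e,c)" by (cases w)
      have "e \<in> Exps S N" using w(1) wc unfolding Ebox_def by auto
      hence "fmap p S N u x = fmap p S N w (aff_act p s x)" using shift[OF fS assms(2)] w(2) wc by simp
      thus ?thesis using u w by auto
    next
      case False thus ?thesis using u by auto
    qed
  qed
  have fE: "finite ?E" using finite_Ebox[OF fS] .
  have "phi p S N x0 x \<le> card ({u \<in> ?E - Tm s ` ?E. fmap p S N u x = x0} \<union> Tm s ` {w \<in> ?E. fmap p S N w (aff_act p s x) = x0})"
    unfolding phi_def by (rule card_mono[OF _ sub]) (auto simp: fE)
  also have "\<dots> \<le> card {u \<in> ?E - Tm s ` ?E. fmap p S N u x = x0} + card (Tm s ` {w \<in> ?E. fmap p S N w (aff_act p s x) = x0})"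
    by (rule card_Un_le)
  also have "card (Tm s ` {w \<in> ?E. fmap p S N w (aff_act p s x) = x0}) \<le> phi p S N x0 (aff_act p s x)"
    unfolding phi_def by (rule card_image_le) (auto simp: fE)
  finally show ?thesis by simp
qed

definition Xl where "Xl p S N x0 t = {x \<in> {..<p}. t \<le> phi p S N x0 x}"

lemma lev_bound:
  assumes "prime p" "S \<subseteq> aff_grp p" "x0 < p" "s \<in> S"
  shows "(\<Sum>t\<in>{1..K}. card {x \<in> Xl p S N x0 t. aff_act p s x \<notin> Xl p S N x0 t}) \<le> card (Ebox S N - Tm s ` Ebox S N)"
proof -
  let ?phi = "phi p S N x0" and ?D = "Ebox S N - Tm s ` Ebox S N"
  have p0: "p > 0" using assms(1) prime_gt_0_nat by blast
  have act: "aff_act p s x < p" for x unfolding aff_act_def using p0 by simp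
  have "(\<Sum>t\<in>{1..K}. card {x \<in> Xl p S N x0 t. aff_act p s x \<notin> Xl p S N x0 t})
      = (\<Sum>t\<in>{1..K}. card {x \<in> {..<p}. t \<le> ?phi x \<and> ?phi (aff_act p s x) < t})"
    unfolding Xl_def using act by (intro sum.cong) (auto simp: not_le intro!: arg_cong[where f=card])
  also have "\<dots> = (\<Sum>x\<in>{..<p}. card {t \<in> {1..K}. t \<le> ?phi x \<and> ?phi (aff_act p s x) < t})"
    by (rule card_swap) auto
  also have "\<dots> \<le> (\<Sum>x\<in>{..<p}. ?phi x - ?phi (aff_act p s x))"
  proof (rule sum_mono)
    fix x
    have "{t \<in> {1..K}. t \<le> ?phi x \<and> ?phi (aff_act p s x) < t} \<subseteq> {?phi (aff_act p s x)<..?phi x}" by auto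
    hence "card {t \<in> {1..K}. t \<le> ?phi x \<and> ?phi (aff_act p s x) < t} \<le> card {?phi (aff_act p s x)<..?phi x}"
      by (rule card_mono[rotated]) auto
    thus "card {t \<in> {1..K}. t \<le> ?phi x \<and> ?phi (aff_act p s x) < t} \<le> ?phi x - ?phi (aff_act p s x)" by simp
  qed
  also have "\<dots> \<le> (\<Sum>x\<in>{..<p}. card {u \<in> ?D. fmap p S N u x = x0})"
  proof (rule sum_mono)
    fix x show "?phi x - ?phi (aff_act p s x) \<le> card {u \<in> ?D. fmap p S N u x = x0}"
      using phi_le[OF assms(2,4), of N x0 x] by linarith
  qed
  also have "\<dots> = card ?D" by (rule sum_fiber[OF assms(1-3)]) auto
  finally show ?thesis .
qed

lemma boundary_le:
  assumes "finite S" "finite X"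
  shows "card (vertex_boundary V (schreier_adj (aff_act p) S) X) \<le> (\<Sum>s\<in>S. card {x \<in> X. aff_act p s x \<notin> X})"
proof -
  have "vertex_boundary V (schreier_adj (aff_act p) S) X \<subseteq> (\<Union>s\<in>S. aff_act p s ` {x \<in> X. aff_act p s x \<notin> X})"
    unfolding vertex_boundary_def schreier_adj_def by auto
  hence "card (vertex_boundary V (schreier_adj (aff_act p) S) X) \<le> card (\<Union>s\<in>S. aff_act p s ` {x \<in> X. aff_act p s x \<notin> X})"
    by (rule card_mono[rotated]) (use assms in auto)
  also have "\<dots> \<le> (\<Sum>s\<in>S. card (aff_act p s ` {x \<in> X. aff_act p s x \<notin> X}))"
    by (rule card_UN_le[OF assms(1)])
  also have "\<dots> \<le> (\<Sum>s\<in>S. card {x \<in> X. aff_act p s x \<notin> X})"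
    by (rule sum_mono) (rule card_image_le, use assms in auto)
  finally show ?thesis .
qed

lemma sum_levels:
  assumes "prime p" "S \<subseteq> aff_grp p" "x0 < p"
  shows "(\<Sum>t\<in>{1..card (Ebox S N)}. card (Xl p S N x0 t)) = card (Ebox S N)"
proof -
  let ?phi = "phi p S N x0" and ?K = "card (Ebox S N)"
  have fS: "finite S" using assms(2) finite_aff finite_subset by blast
  have le: "?phi x \<le> ?K" for x unfolding phi_def by (rule card_mono) (auto simp: finite_Ebox[OF fS])
  have "(\<Sum>t\<in>{1..?K}. card (Xl p S N x0 t)) = (\<Sum>x\<in>{..<p}. card {t \<in> {1..?K}. t \<le> ?phi x})"
    unfolding Xl_def by (rule card_swap) auto
  also have "\<dots> = (\<Sum>x\<in>{..<p}. ?phi x)"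
  proof (rule sum.cong)
    fix x have "{t \<in> {1..?K}. t \<le> ?phi x} = {1..?phi x}" using le[of x] by auto
    thus "card {t \<in> {1..?K}. t \<le> ?phi x} = ?phi x" by simp
  qed simp
  also have "\<dots> = ?K" unfolding phi_def by (rule sum_fiber[OF assms]) auto
  finally show ?thesis .
qed

lemma card_PiE_pt:
  assumes "finite A" "a \<in> A" "N \<ge> 1"
  shows "N * card (PiE A (\<lambda>i. if i = a then {N-1} else {..<N})) = card (PiE A (\<lambda>_. {..<N}))"
proof -
  have "card (PiE A (\<lambda>i. if i = a then {N-1} else {..<N})) = (\<Prod>i\<in>A. card (if i = a then {N-1} else {..<N}))"
    by (rule card_PiE[OF assms(1)])
  also have "\<dots> = (\<Prod>i\<in>A - {a}. card (if i = a then {N-1} else {..<N}))"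
    by (simp add: prod.remove[OF assms(1,2)])
  also have "\<dots> = (\<Prod>i\<in>A - {a}. N)" by (rule prod.cong) auto
  finally have 1: "card (PiE A (\<lambda>i. if i = a then {N-1} else {..<N})) = (\<Prod>i\<in>A - {a}. N)" .
  have "card (PiE A (\<lambda>_. {..<N})) = (\<Prod>i\<in>A. N)" by (simp add: card_PiE[OF assms(1)])
  also have "\<dots> = N * (\<Prod>i\<in>A - {a}. N)" by (rule prod.remove[OF assms(1,2)])
  finally show ?thesis using 1 by simp
qed

lemma Tdiff:
  assumes "finite S" "s \<in> S" "N \<ge> 1"
  shows "N * card (Tm s ` Ebox S N - Ebox S N) \<le> 2 * card (Ebox S N)"
proof -
  let ?E = "Ebox S N"
  define B1 where "B1 = PiE S (\<lambda>i. if i = s then {N-1} else {..<N}) \<times> Coef S N"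
  define B2 where "B2 = Sigma (Exps S N) (\<lambda>e. PiE (Idx S N) (\<lambda>i. if i = (s,e) then {N-1} else {..<N}))"
  have fE: "finite ?E" using finite_Ebox[OF assms(1)] .
  have sub: "Tm s ` ?E - ?E \<subseteq> Tm s ` (B1 \<union> B2)"
  proof
    fix v assume v: "v \<in> Tm s ` ?E - ?E"
    then obtain u where u: "u \<in> ?E" "v = Tm s u" by blast
    obtain e c where uc: "u = (e,c)" by (cases u)
    have e: "e \<in> Exps S N" and c: "c \<in> Coef S N" using u(1) uc unfolding Ebox_def by auto
    have "u \<in> B1 \<union> B2"
    proof (rule ccontr)
      assume nb: "u \<notin> B1 \<union> B2"
      have es: "e s \<noteq> N - 1"
      proof
        assume "e s = N - 1"
        hence "e \<in> PiE S (\<lambda>i. if i = s then {N-1} else {..<N})" using e unfolding Exps_def by (auto simp: PiE_iff)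
        thus False using nb uc c unfolding B1_def by auto
      qed
      have cs: "c (s,e) \<noteq> N - 1"
      proof
        assume "c (s,e) = N - 1"
        hence "c \<in> PiE (Idx S N) (\<lambda>i. if i = (s,e) then {N-1} else {..<N})" using c unfolding Coef_def by (auto simp: PiE_iff)
        thus False using nb uc e unfolding B2_def by auto
      qed
      have mem: "(s,e) \<in> Idx S N" using assms(2) e unfolding Idx_def by auto
      have "e s < N" using e assms(2) unfolding Exps_def by auto
      hence "Suc (e s) < N" using es by linarith
      hence e': "e(s := Suc (e s)) \<in> Exps S N" using e assms(2) unfolding Exps_def by (auto simp: PiE_iff extensional_def)
      have "c (s,e) < N" using c mem unfolding Coef_def by auto
      hence "Suc (c (s,e)) < N" using cs by linarith
      hence c': "c((s,e) := Suc (c (s,e))) \<in> Coef S N" using c mem unfolding Coef_def by (auto simp: PiE_iff extensional_def)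
      have "v \<in> ?E" using u(2) uc e' c' unfolding Tm_def Ebox_def by simp
      thus False using v by simp
    qed
    thus "v \<in> Tm s ` (B1 \<union> B2)" using u by blast
  qed
  have fB1: "finite B1" unfolding B1_def using assms(1) finite_Coef by (simp add: finite_PiE)
  have fB2: "finite B2" unfolding B2_def using assms(1) finite_Exps finite_Idx by (simp add: finite_PiE)
  have "card (Tm s ` ?E - ?E) \<le> card (Tm s ` (B1 \<union> B2))"
    by (rule card_mono[OF _ sub]) (simp add: fB1 fB2)
  also have "\<dots> \<le> card (B1 \<union> B2)" by (rule card_image_le) (simp add: fB1 fB2)
  also have "\<dots> \<le> card B1 + card B2" by (rule card_Un_le)
  finally have 1: "N * card (Tm s ` ?E - ?E) \<le> N * card B1 + N * card B2"
    by (metis add_mult_distrib2 mult_le_mono2)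
  have "N * card B1 = card (Exps S N) * card (Coef S N)"
    unfolding B1_def card_cartesian_product Exps_def using card_PiE_pt[OF assms(1,2,3)] by (simp add: mult.assoc[symmetric])
  also have "\<dots> = card ?E" unfolding Ebox_def by (simp add: card_cartesian_product)
  finally have 2: "N * card B1 = card ?E" .
  have "N * card B2 = N * (\<Sum>e\<in>Exps S N. card (PiE (Idx S N) (\<lambda>i. if i = (s,e) then {N-1} else {..<N})))"
    unfolding B2_def using assms(1) finite_Exps finite_Idx by (subst card_SigmaI) (auto simp: finite_PiE)
  also have "\<dots> = (\<Sum>e\<in>Exps S N. card (Coef S N))"
    unfolding sum_distrib_left Coef_def
  proof (rule sum.cong)
    fix e assume "e \<in> Exps S N"
    hence "(s,e) \<in> Idx S N" using assms(2) unfolding Idx_def by auto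
    thus "N * card (PiE (Idx S N) (\<lambda>i. if i = (s,e) then {N-1} else {..<N})) = card (PiE (Idx S N) (\<lambda>_. {..<N}))"
      using card_PiE_pt[OF finite_Idx[OF assms(1)] _ assms(3)] by blast
  qed simp
  also have "\<dots> = card ?E" unfolding Ebox_def by (simp add: card_cartesian_product)
  finally have 3: "N * card B2 = card ?E" .
  show ?thesis using 1 2 3 by simp
qed

lemma diff_swap_card:
  assumes "finite S"
  shows "card (Ebox S N - Tm s ` Ebox S N) = card (Tm s ` Ebox S N - Ebox S N)"
proof -
  let ?E = "Ebox S N"
  have fE: "finite ?E" using finite_Ebox[OF assms] .
  have ci: "card (Tm s ` ?E) = card ?E" by (rule card_image) (meson Tm_inj inj_on_subset subset_UNIV)
  have "card (?E - Tm s ` ?E) = card ?E - card (?E \<inter> Tm s ` ?E)" by (rule card_Diff_subset_Int) (simp add: fE)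
  moreover have "card (Tm s ` ?E - ?E) = card (Tm s ` ?E) - card (Tm s ` ?E \<inter> ?E)" by (rule card_Diff_subset_Int) (simp add: fE)
  ultimately show ?thesis using ci by (simp add: Int_commute)
qed

lemma key:
  assumes "prime p" "S \<subseteq> aff_grp p" "N \<ge> 1"
  shows "\<exists>X. X \<subseteq> {..<p} \<and> X \<noteq> {} \<and> card X \<le> card (Ebox S N) \<and>
     N * card (vertex_boundary {..<p} (schreier_adj (aff_act p) S) X) \<le> 2 * card S * card X"
proof (rule ccontr)
  assume H: "\<not> ?thesis"
  let ?E = "Ebox S N" and ?K = "card (Ebox S N)" and ?X = "Xl p S N 0"
  let ?vb = "\<lambda>X. vertex_boundary {..<p} (schreier_adj (aff_act p) S) X"
  have p0: "0 < p" using assms(1) prime_gt_0_nat by blast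
  have fS: "finite S" using assms(2) finite_aff finite_subset by blast
  have fE: "finite ?E" using finite_Ebox[OF fS] .
  have sl: "(\<Sum>t\<in>{1..?K}. card (?X t)) = ?K" using sum_levels[OF assms(1,2) p0] .
  have Xsub: "?X t \<subseteq> {..<p}" for t unfolding Xl_def by auto
  have fX: "finite (?X t)" for t using Xsub finite_subset by blast
  have cX: "card (?X t) \<le> ?K" if "t \<in> {1..?K}" for t
    using member_le_sum[of t "{1..?K}" "\<lambda>t. card (?X t)"] that sl by simp
  have Ene: "?E \<noteq> {}" unfolding Ebox_def Exps_def Coef_def using assms(3) by (auto simp: PiE_eq_empty_iff lessThan_empty_iff)
  hence Kpos: "?K > 0" using fE by (simp add: card_gt_0_iff)
  have ex: "\<exists>t\<in>{1..?K}. ?X t \<noteq> {}"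
  proof (rule ccontr)
    assume "\<not> ?thesis"
    hence "(\<Sum>t\<in>{1..?K}. card (?X t)) = 0" by simp
    thus False using sl Kpos by simp
  qed
  have fg: "\<forall>t\<in>{1..?K}. 2 * card S * card (?X t) \<le> N * card (?vb (?X t))"
  proof
    fix t assume t: "t \<in> {1..?K}"
    show "2 * card S * card (?X t) \<le> N * card (?vb (?X t))"
    proof (cases "?X t = {}")
      case True thus ?thesis by simp
    next
      case False thus ?thesis using H Xsub cX[OF t] by (meson not_le less_imp_le)
    qed
  qed
  have strict: "\<exists>t\<in>{1..?K}. 2 * card S * card (?X t) < N * card (?vb (?X t))"
    using ex H Xsub cX by (meson not_le)
  have "2 * card S * ?K = (\<Sum>t\<in>{1..?K}. 2 * card S * card (?X t))"
    using sl by (simp add: sum_distrib_left[symmetric])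
  also have "\<dots> < (\<Sum>t\<in>{1..?K}. N * card (?vb (?X t)))"
    by (rule sum_strict_mono_ex1[OF _ fg strict]) simp
  also have "\<dots> \<le> (\<Sum>t\<in>{1..?K}. N * (\<Sum>s\<in>S. card {x \<in> ?X t. aff_act p s x \<notin> ?X t}))"
    by (rule sum_mono) (use boundary_le[OF fS fX] in simp)
  also have "\<dots> = N * (\<Sum>s\<in>S. (\<Sum>t\<in>{1..?K}. card {x \<in> ?X t. aff_act p s x \<notin> ?X t}))"
    by (simp add: sum_distrib_left sum.swap[of _ S])
  also have "\<dots> \<le> N * (\<Sum>s\<in>S. card (?E - Tm s ` ?E))"
    by (intro mult_le_mono2 sum_mono lev_bound[OF assms(1,2) p0])
  also have "\<dots> = (\<Sum>s\<in>S. N * card (Tm s ` ?E - ?E))"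
    by (simp add: sum_distrib_left diff_swap_card[OF fS])
  also have "\<dots> \<le> (\<Sum>s\<in>S. 2 * ?K)"
    by (rule sum_mono) (rule Tdiff[OF fS _ assms(3)])
  also have "\<dots> = 2 * card S * ?K" by simp
  finally show False by simp
qed

lemma card_Ebox_le:
  assumes "finite S" "card S \<le> k" "N \<ge> 1"
  shows "card (Ebox S N) \<le> N ^ k * N ^ (k * N ^ k)"
proof -
  have ce: "card (Exps S N) = N ^ card S" unfolding Exps_def by (simp add: card_PiE[OF assms(1)])
  have e: "card (Exps S N) \<le> N ^ k" unfolding ce using assms by (simp add: power_increasing)
  have "card (Idx S N) = card S * card (Exps S N)" unfolding Idx_def by (simp add: card_cartesian_product)
  also have "\<dots> \<le> k * N ^ k" using e assms(2) by (simp add: mult_le_mono)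
  finally have i: "card (Idx S N) \<le> k * N ^ k" .
  have "card (Coef S N) = N ^ card (Idx S N)" unfolding Coef_def by (simp add: card_PiE[OF finite_Idx[OF assms(1)]])
  also have "\<dots> \<le> N ^ (k * N ^ k)" using i assms(3) by (simp add: power_increasing)
  finally have c: "card (Coef S N) \<le> N ^ (k * N ^ k)" .
  show ?thesis unfolding Ebox_def card_cartesian_product using e c by (simp add: mult_le_mono)
qed

theorem mainTheorem3:
  shows "\<not> aff_expanding"
proof
  assume "aff_expanding"
  then obtain k :: nat and \<epsilon> :: real and S where eps: "\<epsilon> > 0" and
    H: "\<forall>p. prime p \<and> odd p \<longrightarrow> S p \<subseteq> aff_grp p \<and> aff_symmetric p (S p) \<and> card (S p) \<le> k \<and>
            h_ver {..<p} (schreier_adj (aff_act p) (S p)) \<ge> \<epsilon>"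
    unfolding aff_expanding_def by blast
  define N where "N = nat \<lceil>2 * real k / \<epsilon>\<rceil> + 1"
  have N1: "N \<ge> 1" unfolding N_def by simp
  have "2 * real k / \<epsilon> < real N" unfolding N_def by linarith
  hence Neps: "2 * real k < real N * \<epsilon>" using eps by (simp add: field_simps)
  define Q where "Q = N ^ k * N ^ (k * N ^ k)"
  obtain p :: nat where p: "prime p" "2 * Q + 2 < p" using bigger_prime by blast
  have "odd p" using p prime_odd_nat by auto
  hence Hp: "S p \<subseteq> aff_grp p" "card (S p) \<le> k" "h_ver {..<p} (schreier_adj (aff_act p) (S p)) \<ge> \<epsilon>"
    using H p(1) by auto
  have fS: "finite (S p)" using Hp(1) finite_aff finite_subset by blast
  obtain X where X: "X \<subseteq> {..<p}" "X \<noteq> {}" "card X \<le> card (Ebox (S p) N)"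
    "N * card (vertex_boundary {..<p} (schreier_adj (aff_act p) (S p)) X) \<le> 2 * card (S p) * card X"
    using key[OF p(1) Hp(1) N1] by blast
  let ?vb = "vertex_boundary {..<p} (schreier_adj (aff_act p) (S p))"
  have fX: "finite X" using X(1) finite_subset by blast
  have cX: "card X > 0" using X(2) fX by (simp add: card_gt_0_iff)
  have "card X \<le> Q" using X(3) card_Ebox_le[OF fS Hp(2) N1] unfolding Q_def by linarith
  hence half: "2 * card X \<le> card {..<p}" using p(2) by simp
  let ?M = "{real (card (?vb Y)) / real (card Y) | Y. Y \<subseteq> {..<p} \<and> Y \<noteq> {} \<and> 2 * card Y \<le> card {..<p}}"
  have finM: "finite ?M"
  proof -
    have "{Y. Y \<subseteq> {..<p} \<and> Y \<noteq> {} \<and> 2 * card Y \<le> card {..<p}} \<subseteq> Pow {..<p}" by auto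
    hence "finite {Y. Y \<subseteq> {..<p} \<and> Y \<noteq> {} \<and> 2 * card Y \<le> card {..<p}}" by (rule finite_subset) simp
    thus ?thesis by (rule finite_image_set)
  qed
  have "h_ver {..<p} (schreier_adj (aff_act p) (S p)) \<le> real (card (?vb X)) / real (card X)"
    unfolding h_ver_def by (rule Min_le[OF finM]) (use X(1,2) half in blast)
  also have "\<dots> \<le> 2 * real (card (S p)) / real N"
  proof -
    have "real N * real (card (?vb X)) \<le> 2 * real (card (S p)) * real (card X)"
      using X(4) by (metis of_nat_le_iff of_nat_mult of_nat_numeral)
    thus ?thesis using cX N1 by (simp add: field_simps)
  qed
  also have "\<dots> \<le> 2 * real k / real N" using Hp(2) N1 by (simp add: divide_right_mono)
  also have "\<dots> < \<epsilon>" using Neps N1 by (simp add: field_simps)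
  finally show False using Hp(3) by simp
qed

end
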